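(* Let $F:\mathcal C\to\mathcal D$ be a left multiadjoint and let $\mathcal M$ be a composable class of morphisms in $\mathcal D$. Suppose $\perp$ is an independence relation on $\mathcal D_{\mathcal M}$ that satisfies existence and that, regarded as an independence relation on $\mathcal D$, satisfies semi-invariance. Then $F^{-1}(\perp)$, as an independence relation on $\mathcal C_{F^{-1}(\mathcal M)}$, satisfies existence, where $F^{-1}(\mathcal M)$ is the class of morphisms $f$ of $\mathcal C$ with $F(f)\in\mathcal M$.
   Context: A class $\mathcal M$ of morphisms is composable if it is closed under composition and contains all isomorphisms; $\mathcal D_{\mathcal M}$ is the subcategory with all objects and morphisms in $\mathcal M$. A functor $F$ is a left multiadjoint if for every object $D$ of $\mathcal D$ there is a family $\{e_k:F(C_k)\to D\}_{k\in K}$ such that every $e:F(C)\to D$ factors as $e=e_kF(f)$ for a unique $k$ and unique $f:C\to C_k$. A commuting square consists of objects $C,A,B,M$ and morphisms $C\to A$, $C\to B$, $A\to M$, $B\to M$ with equal composites $C\to M$. An independence relation is a class of commuting squares (called independent); write $A\perp^M_C B$. $F^{-1}(\perp)$ consists of the commuting squares whose image under $F$ is in $\perp$. Existence: every span $A\leftarrow C\to B$ can be completed to an independent square. Semi-invariance: for a commuting square $C\to A$, $C\to B$, $A\to M$, $B\to M$ and any $M\to N$, if the square with $A\to M\to N$, $B\to M\to N$ is independent then the square with $A\to M$, $B\to M$ is independent. *)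

theory Defs
  imports Main
begin

text \<open>Categories with object type 'o and arrow type 'a.
  Comp g f denotes the composite g after f, defined when Cod f = Dom g.\<close>

record ('o, 'a) cat =
  Obj  :: "'o set"
  Arr  :: "'a set"
  Dom  :: "'a \<Rightarrow> 'o"
  Cod  :: "'a \<Rightarrow> 'o"
  Id   :: "'o \<Rightarrow> 'a"
  Comp :: "'a \<Rightarrow> 'a \<Rightarrow> 'a"

definition hom :: "('o, 'a) cat \<Rightarrow> 'o \<Rightarrow> 'o \<Rightarrow> 'a set" where
  "hom X x y = {f \<in> Arr X. Dom X f = x \<and> Cod X f = y}"

definition category :: "('o, 'a) cat \<Rightarrow> bool" where
  "category X \<longleftrightarrow>
     (\<forall>f \<in> Arr X. Dom X f \<in> Obj X \<and> Cod X f \<in> Obj X) \<and>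
     (\<forall>x \<in> Obj X. Id X x \<in> hom X x x) \<and>
     (\<forall>f \<in> Arr X. \<forall>g \<in> Arr X. Cod X f = Dom X g \<longrightarrow>
        Comp X g f \<in> hom X (Dom X f) (Cod X g)) \<and>
     (\<forall>f \<in> Arr X. \<forall>g \<in> Arr X. \<forall>h \<in> Arr X. Cod X f = Dom X g \<longrightarrow> Cod X g = Dom X h \<longrightarrow>
        Comp X h (Comp X g f) = Comp X (Comp X h g) f) \<and>
     (\<forall>f \<in> Arr X. Comp X f (Id X (Dom X f)) = f \<and> Comp X (Id X (Cod X f)) f = f)"

definition is_functor ::
  "('o1, 'a1) cat \<Rightarrow> ('o2, 'a2) cat \<Rightarrow> ('o1 \<Rightarrow> 'o2) \<Rightarrow> ('a1 \<Rightarrow> 'a2) \<Rightarrow> bool" where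
  "is_functor C D Fo Fa \<longleftrightarrow> category C \<and> category D \<and>
     (\<forall>x \<in> Obj C. Fo x \<in> Obj D \<and> Fa (Id C x) = Id D (Fo x)) \<and>
     (\<forall>f \<in> Arr C. Fa f \<in> hom D (Fo (Dom C f)) (Fo (Cod C f))) \<and>
     (\<forall>f \<in> Arr C. \<forall>g \<in> Arr C. Cod C f = Dom C g \<longrightarrow>
        Fa (Comp C g f) = Comp D (Fa g) (Fa f))"

text \<open>Left multiadjoint: for every object d of D there is a family of arrows
  e_k : F(C_k) \<rightarrow> d, encoded as a set K of pairs (C_k, e_k), such that every
  e : F(c) \<rightarrow> d factors as e = e_k \<circ> F(f) for a unique k and a unique f : c \<rightarrow> C_k.\<close>

definition left_multiadjoint ::
  "('o1, 'a1) cat \<Rightarrow> ('o2, 'a2) cat \<Rightarrow> ('o1 \<Rightarrow> 'o2) \<Rightarrow> ('a1 \<Rightarrow> 'a2) \<Rightarrow> bool" where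
  "left_multiadjoint C D Fo Fa \<longleftrightarrow> is_functor C D Fo Fa \<and>
     (\<forall>d \<in> Obj D. \<exists>K. (\<forall>k \<in> K. fst k \<in> Obj C \<and> snd k \<in> hom D (Fo (fst k)) d) \<and>
        (\<forall>c \<in> Obj C. \<forall>e \<in> hom D (Fo c) d.
           \<exists>!p. (case p of (k, f) \<Rightarrow>
             k \<in> K \<and> f \<in> hom C c (fst k) \<and> e = Comp D (snd k) (Fa f))))"

definition iso :: "('o, 'a) cat \<Rightarrow> 'a \<Rightarrow> bool" where
  "iso X f \<longleftrightarrow> f \<in> Arr X \<and> (\<exists>g \<in> hom X (Cod X f) (Dom X f).
      Comp X g f = Id X (Dom X f) \<and> Comp X f g = Id X (Cod X f))"

definition composable_class :: "('o, 'a) cat \<Rightarrow> 'a set \<Rightarrow> bool" where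
  "composable_class X M \<longleftrightarrow> M \<subseteq> Arr X \<and>
     (\<forall>f \<in> M. \<forall>g \<in> M. Cod X f = Dom X g \<longrightarrow> Comp X g f \<in> M) \<and>
     (\<forall>f. iso X f \<longrightarrow> f \<in> M)"

definition subcat :: "('o, 'a) cat \<Rightarrow> 'a set \<Rightarrow> ('o, 'a) cat" where
  "subcat X M = X\<lparr>Arr := M\<rparr>"

text \<open>A square is (C \<rightarrow> A, C \<rightarrow> B, A \<rightarrow> M, B \<rightarrow> M), i.e. (f1, f2, g1, g2).\<close>
type_synonym 'a square = "'a \<times> 'a \<times> 'a \<times> 'a"

definition comm_square :: "('o, 'a) cat \<Rightarrow> 'a square \<Rightarrow> bool" where
  "comm_square X s = (case s of (f1, f2, g1, g2) \<Rightarrow>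
     f1 \<in> Arr X \<and> f2 \<in> Arr X \<and> g1 \<in> Arr X \<and> g2 \<in> Arr X \<and>
     Dom X f1 = Dom X f2 \<and> Cod X f1 = Dom X g1 \<and> Cod X f2 = Dom X g2 \<and>
     Cod X g1 = Cod X g2 \<and> Comp X g1 f1 = Comp X g2 f2)"

definition independence_relation :: "('o, 'a) cat \<Rightarrow> 'a square set \<Rightarrow> bool" where
  "independence_relation X R \<longleftrightarrow> (\<forall>s \<in> R. comm_square X s)"

definition existence :: "('o, 'a) cat \<Rightarrow> 'a square set \<Rightarrow> bool" where
  "existence X R \<longleftrightarrow> (\<forall>f1 \<in> Arr X. \<forall>f2 \<in> Arr X. Dom X f1 = Dom X f2 \<longrightarrow>
     (\<exists>g1 g2. comm_square X (f1, f2, g1, g2) \<and> (f1, f2, g1, g2) \<in> R))"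

definition semi_invariance :: "('o, 'a) cat \<Rightarrow> 'a square set \<Rightarrow> bool" where
  "semi_invariance X R \<longleftrightarrow> (\<forall>f1 f2 g1 g2 h. comm_square X (f1, f2, g1, g2) \<longrightarrow>
     h \<in> Arr X \<longrightarrow> Dom X h = Cod X g1 \<longrightarrow>
     (f1, f2, Comp X h g1, Comp X h g2) \<in> R \<longrightarrow> (f1, f2, g1, g2) \<in> R)"

definition preimage_class :: "('o, 'a) cat \<Rightarrow> ('a \<Rightarrow> 'b) \<Rightarrow> 'b set \<Rightarrow> 'a set" where
  "preimage_class C Fa M = {f \<in> Arr C. Fa f \<in> M}"

definition preimage_rel ::
  "('o, 'a) cat \<Rightarrow> ('a \<Rightarrow> 'b) \<Rightarrow> 'b square set \<Rightarrow> 'a square set" where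
  "preimage_rel C Fa R = {(f1, f2, g1, g2). comm_square C (f1, f2, g1, g2) \<and>
      (Fa f1, Fa f2, Fa g1, Fa g2) \<in> R}"

end

theory Submission
  imports Defs
begin


lemma ex1_eq_helper: "\<exists>!x. P x \<Longrightarrow> P a \<Longrightarrow> P b \<Longrightarrow> a = b" by blast

lemma cat_assoc: "category X \<Longrightarrow> f \<in> Arr X \<Longrightarrow> g \<in> Arr X \<Longrightarrow> h \<in> Arr X \<Longrightarrow>
  Cod X f = Dom X g \<Longrightarrow> Cod X g = Dom X h \<Longrightarrow> Comp X h (Comp X g f) = Comp X (Comp X h g) f"
  unfolding category_def by blast

lemma mafac: assumes "\<forall>c \<in> Obj C. \<forall>e \<in> hom D (Fo c) m.
           \<exists>!p. (case p of (k, f) \<Rightarrow>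
             k \<in> K \<and> f \<in> hom C c (fst k) \<and> e = Comp D (snd k) (Fa f))"
  and "c \<in> Obj C" "e \<in> hom D (Fo c) m"
  obtains k f where "k \<in> K" "f \<in> hom C c (fst k)" "e = Comp D (snd k) (Fa f)"
proof -
  from assms have "\<exists>p. (case p of (k, f) \<Rightarrow>
             k \<in> K \<and> f \<in> hom C c (fst k) \<and> e = Comp D (snd k) (Fa f))" by blast
  then obtain p where "case p of (k, f) \<Rightarrow>
             k \<in> K \<and> f \<in> hom C c (fst k) \<and> e = Comp D (snd k) (Fa f)" ..
  then show ?thesis using that by (cases p) auto
qed

theorem theorem5p3:
  fixes C :: "('o1, 'a1) cat" and D :: "('o2, 'a2) cat"
    and Fo :: "'o1 \<Rightarrow> 'o2" and Fa :: "'a1 \<Rightarrow> 'a2"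
    and M :: "'a2 set" and R :: "'a2 square set"
  assumes "left_multiadjoint C D Fo Fa"
    and "composable_class D M"
    and "independence_relation (subcat D M) R"
    and "existence (subcat D M) R"
    and "semi_invariance D R"
  shows "independence_relation (subcat C (preimage_class C Fa M)) (preimage_rel C Fa R)
    \<and> existence (subcat C (preimage_class C Fa M)) (preimage_rel C Fa R)"
proof
  have F: "is_functor C D Fo Fa" using assms(1) unfolding left_multiadjoint_def by blast
  hence cC: "category C" and cD: "category D" unfolding is_functor_def by auto
  have RM2: "(a,b,c,d) \<in> R \<Longrightarrow> a \<in> M \<and> b \<in> M \<and> c \<in> M \<and> d \<in> M" for a b c d
  proof -
    assume "(a,b,c,d) \<in> R"
    hence "comm_square (subcat D M) (a,b,c,d)" using assms(3) unfolding independence_relation_def by blast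
    thus ?thesis unfolding comm_square_def subcat_def by simp
  qed
  show "independence_relation (subcat C (preimage_class C Fa M)) (preimage_rel C Fa R)"
    unfolding independence_relation_def
  proof
    fix s assume "s \<in> preimage_rel C Fa R"
    then obtain f1 f2 g1 g2 where s: "s = (f1,f2,g1,g2)" "comm_square C (f1,f2,g1,g2)"
      "(Fa f1, Fa f2, Fa g1, Fa g2) \<in> R" unfolding preimage_rel_def by auto
    from RM2[OF s(3)] s(2) show "comm_square (subcat C (preimage_class C Fa M)) s"
      unfolding s(1) comm_square_def subcat_def preimage_class_def by auto
  qed
  show "existence (subcat C (preimage_class C Fa M)) (preimage_rel C Fa R)"
    unfolding existence_def
  proof (intro ballI impI)
    let ?N = "preimage_class C Fa M"
    fix f1 f2 assume f1: "f1 \<in> Arr (subcat C ?N)" and f2: "f2 \<in> Arr (subcat C ?N)"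
      and dd: "Dom (subcat C ?N) f1 = Dom (subcat C ?N) f2"
    have f1C: "f1 \<in> Arr C" "Fa f1 \<in> M" and f2C: "f2 \<in> Arr C" "Fa f2 \<in> M"
      using f1 f2 unfolding subcat_def preimage_class_def by auto
    have dd': "Dom C f1 = Dom C f2" using dd unfolding subcat_def by simp
    define c a b where "c = Dom C f1" and "a = Cod C f1" and "b = Cod C f2"
    have Ff1: "Fa f1 \<in> hom D (Fo c) (Fo a)" and Ff2: "Fa f2 \<in> hom D (Fo c) (Fo b)"
      using F f1C f2C dd' unfolding is_functor_def c_def a_def b_def by auto
    have "Fa f1 \<in> Arr (subcat D M)" "Fa f2 \<in> Arr (subcat D M)"
         "Dom (subcat D M) (Fa f1) = Dom (subcat D M) (Fa f2)"
      using f1C f2C Ff1 Ff2 unfolding subcat_def hom_def by auto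
    then obtain g1 g2 where sq: "comm_square (subcat D M) (Fa f1, Fa f2, g1, g2)"
      and inR: "(Fa f1, Fa f2, g1, g2) \<in> R"
      using assms(4) unfolding existence_def by blast
    define m where "m = Cod D g1"
    have g1: "g1 \<in> hom D (Fo a) m" and g2: "g2 \<in> hom D (Fo b) m"
      and gcomm: "Comp D g1 (Fa f1) = Comp D g2 (Fa f2)"
      using sq Ff1 Ff2 assms(2) unfolding comm_square_def subcat_def hom_def m_def composable_class_def
      by auto
    have mO: "m \<in> Obj D" using g1 cD unfolding category_def hom_def by auto
    obtain K where K1: "\<forall>k \<in> K. fst k \<in> Obj C \<and> snd k \<in> hom D (Fo (fst k)) m"
      and K2: "\<forall>c \<in> Obj C. \<forall>e \<in> hom D (Fo c) m.
           \<exists>!p. (case p of (k, f) \<Rightarrow>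
             k \<in> K \<and> f \<in> hom C c (fst k) \<and> e = Comp D (snd k) (Fa f))"
      using assms(1) mO unfolding left_multiadjoint_def by blast
    have objs: "c \<in> Obj C" "a \<in> Obj C" "b \<in> Obj C"
      using cC f1C f2C unfolding category_def c_def a_def b_def by auto
    obtain k1 h1 where k1: "k1 \<in> K" "h1 \<in> hom C a (fst k1)" "g1 = Comp D (snd k1) (Fa h1)"
      by (rule mafac[OF K2 objs(2) g1])
    obtain k2 h2 where k2: "k2 \<in> K" "h2 \<in> hom C b (fst k2)" "g2 = Comp D (snd k2) (Fa h2)"
      by (rule mafac[OF K2 objs(3) g2])
    have Fh1: "Fa h1 \<in> hom D (Fo a) (Fo (fst k1))" and Fh2: "Fa h2 \<in> hom D (Fo b) (Fo (fst k2))"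
      using F k1 k2 unfolding is_functor_def hom_def by auto
    have e1: "snd k1 \<in> hom D (Fo (fst k1)) m" and e2: "snd k2 \<in> hom D (Fo (fst k2)) m"
      using K1 k1 k2 by auto
    have hf1: "Comp C h1 f1 \<in> hom C c (fst k1)" and hf2: "Comp C h2 f2 \<in> hom C c (fst k2)"
      using cC k1 k2 f1C f2C dd' unfolding category_def hom_def c_def a_def b_def by auto
    have Fc1: "Fa (Comp C h1 f1) = Comp D (Fa h1) (Fa f1)"
      using F k1 f1C unfolding is_functor_def hom_def a_def by auto
    have Fc2: "Fa (Comp C h2 f2) = Comp D (Fa h2) (Fa f2)"
      using F k2 f2C unfolding is_functor_def hom_def b_def by auto
    have as1: "Comp D g1 (Fa f1) = Comp D (snd k1) (Fa (Comp C h1 f1))"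
      unfolding k1(3) Fc1 using cat_assoc[OF cD, of "Fa f1" "Fa h1" "snd k1"] Ff1 Fh1 e1 unfolding hom_def by simp
    have as2: "Comp D g2 (Fa f2) = Comp D (snd k2) (Fa (Comp C h2 f2))"
      unfolding k2(3) Fc2 using cat_assoc[OF cD, of "Fa f2" "Fa h2" "snd k2"] Ff2 Fh2 e2 unfolding hom_def by simp
    define e where "e = Comp D g1 (Fa f1)"
    have eh: "e \<in> hom D (Fo c) m" using cD g1 Ff1 unfolding e_def category_def hom_def by auto
    from K2 objs(1) eh have uq: "\<exists>!p. (case p of (k, f) \<Rightarrow>
             k \<in> K \<and> f \<in> hom C c (fst k) \<and> e = Comp D (snd k) (Fa f))" by blast
    have P1: "case (k1, Comp C h1 f1) of (k, f) \<Rightarrow> k \<in> K \<and> f \<in> hom C c (fst k) \<and> e = Comp D (snd k) (Fa f)"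
      using k1 hf1 as1 e_def by simp
    have P2: "case (k2, Comp C h2 f2) of (k, f) \<Rightarrow> k \<in> K \<and> f \<in> hom C c (fst k) \<and> e = Comp D (snd k) (Fa f)"
      using k2 hf2 as2 gcomm e_def by simp
    have eq: "(k1, Comp C h1 f1) = (k2, Comp C h2 f2)" by (rule ex1_eq_helper[OF uq P1 P2])
    hence kk: "k1 = k2" and hh: "Comp C h1 f1 = Comp C h2 f2" by auto
    have csC: "comm_square C (f1, f2, h1, h2)"
      using f1C f2C k1 k2 dd' kk hh unfolding comm_square_def hom_def a_def b_def by auto
    have csD: "comm_square D (Fa f1, Fa f2, Fa h1, Fa h2)"
      using Ff1 Ff2 Fh1 Fh2 kk hh Fc1 Fc2 unfolding comm_square_def hom_def by auto
    have "(Fa f1, Fa f2, Comp D (snd k1) (Fa h1), Comp D (snd k1) (Fa h2)) \<in> R"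
      using inR k1 k2 kk by simp
    hence inR': "(Fa f1, Fa f2, Fa h1, Fa h2) \<in> R"
      using assms(5)[unfolded semi_invariance_def, rule_format, OF csD, of "snd k1"] e1 Fh1
      unfolding hom_def by simp
    have "(f1, f2, h1, h2) \<in> preimage_rel C Fa R" unfolding preimage_rel_def using csC inR' by auto
    moreover have "comm_square (subcat C ?N) (f1, f2, h1, h2)"
      using csC RM2[OF inR'] unfolding comm_square_def subcat_def preimage_class_def by auto
    ultimately show "\<exists>g1 g2. comm_square (subcat C ?N) (f1, f2, g1, g2) \<and> (f1, f2, g1, g2) \<in> preimage_rel C Fa R"
      by blast
  qed
qed

end
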